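(* Let $\sigma>\sqrt{2}/3$ and define $F(x)=-x^3-3\sigma^2x$ and $G(x)=\sqrt{15\sigma^6+36\sigma^4x^2+9\sigma^2x^4}$. Fix any timestep $\Delta t>0$ and let $$P(\xi\mid x)=\frac{1}{G(x)\sqrt{2\pi\Delta t}}\exp\!\left(\frac{-[\xi-x-F(x)\Delta t]^2}{2G(x)^2\Delta t}\right).$$ Then there is no probability density $\rho^*$ on $\mathbb{R}$ satisfying $\rho^*(\xi)=\int_{-\infty}^{\infty}P(\xi\mid x)\rho^*(x)\,dx$ for all $\xi$ and having finite second raw moment $\int_{-\infty}^{\infty}x^2\rho^*(x)\,dx<\infty$. That is, every such equilibrium density has divergent second moment.
   Context: The functions $F,G$ are the drift and diffusion coefficients of the Itô SDE $dx=(-x^3-3\sigma^2x)\,dt+\sqrt{15\sigma^6+36\sigma^4x^2+9\sigma^2x^4}\,dW$ with noise parameter $\sigma>0$. $P(\xi\mid x)$ is the one-step transition density of its Euler–Maruyama discretization $\xi=x+F(x)\Delta t+G(x)\eta\sqrt{\Delta t}$, $\eta\sim N(0,1)$; an equilibrium is a probability density invariant under this step. *)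

theory Defs
  imports "HOL-Analysis.Analysis"
begin

definition drift :: "real \<Rightarrow> real \<Rightarrow> real" where
  "drift \<sigma> x = -(x ^ 3) - 3 * \<sigma>\<^sup>2 * x"

definition diffusion :: "real \<Rightarrow> real \<Rightarrow> real" where
  "diffusion \<sigma> x = sqrt (15 * \<sigma> ^ 6 + 36 * \<sigma> ^ 4 * x\<^sup>2 + 9 * \<sigma>\<^sup>2 * x ^ 4)"

definition trans_density :: "real \<Rightarrow> real \<Rightarrow> real \<Rightarrow> real \<Rightarrow> real" where
  "trans_density \<sigma> dt \<xi> x =
     1 / (diffusion \<sigma> x * sqrt (2 * pi * dt)) *
     exp (- (\<xi> - x - drift \<sigma> x * dt)\<^sup>2 / (2 * (diffusion \<sigma> x)\<^sup>2 * dt))"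

definition prob_density :: "(real \<Rightarrow> real) \<Rightarrow> bool" where
  "prob_density \<rho> \<longleftrightarrow> (\<forall>x. 0 \<le> \<rho> x) \<and> integrable lborel \<rho> \<and> (\<integral>x. \<rho> x \<partial>lborel) = 1"

text \<open>Invariance under the Euler--Maruyama step, pointwise for every xi.
  The integrand is nonnegative, so the (extended) nonnegative integral is used.\<close>
definition em_equilibrium :: "real \<Rightarrow> real \<Rightarrow> (real \<Rightarrow> real) \<Rightarrow> bool" where
  "em_equilibrium \<sigma> dt \<rho> \<longleftrightarrow> prob_density \<rho> \<and>
     (\<forall>\<xi>. ennreal (\<rho> \<xi>) = (\<integral>\<^sup>+ x. ennreal (trans_density \<sigma> dt \<xi> x * \<rho> x) \<partial>lborel))"

end

theory Submission
  imports Defs "HOL-Probability.Probability"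
begin

lemma td_normal:
  assumes "dt > 0" "\<sigma> > 0"
  shows "trans_density \<sigma> dt \<xi> x = normal_density (x + drift \<sigma> x * dt) (diffusion \<sigma> x * sqrt dt) \<xi>"
proof -
  have G: "diffusion \<sigma> x > 0" unfolding diffusion_def
    by (intro real_sqrt_gt_zero add_pos_nonneg) (use assms in auto)
  have "sqrt (2 * pi * (diffusion \<sigma> x * sqrt dt)\<^sup>2) = diffusion \<sigma> x * sqrt (2*pi*dt)"
    using G assms by (simp add: power_mult_distrib real_sqrt_mult)
  moreover have "(\<xi> - x - drift \<sigma> x * dt)\<^sup>2 = (\<xi> - (x + drift \<sigma> x * dt))\<^sup>2" by (simp add: algebra_simps)
  ultimately show ?thesis unfolding trans_density_def normal_density_def
    using assms by (simp add: power_mult_distrib mult_ac)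
qed

lemma normal_second:
  assumes "s > 0"
  shows "has_bochner_integral lborel (\<lambda>\<xi>. normal_density \<mu> s \<xi> * \<xi>\<^sup>2) (s\<^sup>2 + \<mu>\<^sup>2)"
proof -
  have a: "has_bochner_integral lborel (\<lambda>\<xi>. normal_density \<mu> s \<xi> * (\<xi> - \<mu>)^(2*1)) (s\<^sup>2)"
    using normal_moment_even[OF assms, of \<mu> 1] by (simp add: power2_eq_square)
  have b: "has_bochner_integral lborel (\<lambda>\<xi>. 2*\<mu> * (normal_density \<mu> s \<xi> * \<xi>)) (2*\<mu>*\<mu>)"
    by (intro has_bochner_integral_mult_right normal_moment_nz_1[OF assms])
  have c: "has_bochner_integral lborel (\<lambda>\<xi>. - (\<mu>\<^sup>2 * normal_density \<mu> s \<xi>)) (- (\<mu>\<^sup>2 * 1))"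
    by (intro has_bochner_integral_minus has_bochner_integral_mult_right)
       (use assms in \<open>simp add: has_bochner_integral_iff\<close>)
  have "has_bochner_integral lborel (\<lambda>\<xi>. normal_density \<mu> s \<xi> * (\<xi> - \<mu>)^(2*1) + 2*\<mu> * (normal_density \<mu> s \<xi> * \<xi>) + - (\<mu>\<^sup>2 * normal_density \<mu> s \<xi>)) (s\<^sup>2 + 2*\<mu>*\<mu> + - (\<mu>\<^sup>2 * 1))"
    by (intro has_bochner_integral_add a b c)
  then show ?thesis by (simp add: power2_eq_square algebra_simps)
qed

lemma second_moment_td:
  assumes "dt > 0" "\<sigma> > 0"
  shows "(\<integral>\<^sup>+\<xi>. ennreal (\<xi>\<^sup>2 * trans_density \<sigma> dt \<xi> x) \<partial>lborel)
     = ennreal ((diffusion \<sigma> x * sqrt dt)\<^sup>2 + (x + drift \<sigma> x * dt)\<^sup>2)"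
proof -
  have G: "diffusion \<sigma> x > 0" unfolding diffusion_def
    by (intro real_sqrt_gt_zero add_pos_nonneg) (use assms in auto)
  have s: "diffusion \<sigma> x * sqrt dt > 0" using G assms by simp
  note h = normal_second[OF s, of "x + drift \<sigma> x * dt"]
  have "(\<integral>\<^sup>+\<xi>. ennreal (normal_density (x + drift \<sigma> x * dt) (diffusion \<sigma> x * sqrt dt) \<xi> * \<xi>\<^sup>2) \<partial>lborel)
     = ennreal ((diffusion \<sigma> x * sqrt dt)\<^sup>2 + (x + drift \<sigma> x * dt)\<^sup>2)"
    using h by (subst nn_integral_eq_integral) (auto simp: has_bochner_integral_iff)
  then show ?thesis using td_normal[OF assms] by (simp add: mult.commute)
qed

lemma poly_bound:
  assumes "dt > 0" "\<sigma> > sqrt 2 / 3"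
  shows "(diffusion \<sigma> x * sqrt dt)\<^sup>2 + (x + drift \<sigma> x * dt)\<^sup>2 \<ge> x\<^sup>2 + 15 * \<sigma>^6 * dt"
proof -
  have sp: "\<sigma> > 0" using assms(2) by (smt (verit) real_sqrt_ge_zero divide_nonneg_pos)
  have "sqrt 2 ^ 2 / 9 < \<sigma>^2" using assms(2) power_strict_mono[of "sqrt 2 / 3" \<sigma> 2]
    by (simp add: power_divide)
  hence s2: "\<sigma>^2 > 2/9" by simp
  have G2: "(diffusion \<sigma> x)\<^sup>2 = 15 * \<sigma> ^ 6 + 36 * \<sigma> ^ 4 * x\<^sup>2 + 9 * \<sigma>\<^sup>2 * x ^ 4"
    unfolding diffusion_def by (intro real_sqrt_pow2) (use sp in auto)
  have e: "(diffusion \<sigma> x * sqrt dt)\<^sup>2 + (x + drift \<sigma> x * dt)\<^sup>2 - (x\<^sup>2 + 15 * \<sigma>^6 * dt)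
     = dt * ((9*\<sigma>^2 - 2) * x^4 + 6*\<sigma>^2*(6*\<sigma>^2 - 1) * x^2) + (drift \<sigma> x * dt)\<^sup>2"
    using assms(1) by (simp add: power_mult_distrib G2 drift_def) (simp add: algebra_simps power2_eq_square power4_eq_xxxx power3_eq_cube)
  have "0 \<le> dt * ((9*\<sigma>^2 - 2) * x^4 + 6*\<sigma>^2*(6*\<sigma>^2 - 1) * x^2) + (drift \<sigma> x * dt)\<^sup>2"
    using s2 assms(1) by (intro add_nonneg_nonneg mult_nonneg_nonneg) auto
  then show ?thesis using e by linarith
qed

theorem mainTheorem2:
  fixes \<sigma> dt :: real
  assumes "\<sigma> > sqrt 2 / 3" and "dt > 0"
  shows "\<not> (\<exists>\<rho>. em_equilibrium \<sigma> dt \<rho> \<and> integrable lborel (\<lambda>x. x\<^sup>2 * \<rho> x))"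
proof
  assume "\<exists>\<rho>. em_equilibrium \<sigma> dt \<rho> \<and> integrable lborel (\<lambda>x. x\<^sup>2 * \<rho> x)"
  then obtain \<rho> where eq: "em_equilibrium \<sigma> dt \<rho>" and int2: "integrable lborel (\<lambda>x. x\<^sup>2 * \<rho> x)" by blast
  have sp: "\<sigma> > 0" using assms(1) by (smt (verit) real_sqrt_ge_zero divide_nonneg_pos)
  have nn: "\<And>x. 0 \<le> \<rho> x" and int1: "integrable lborel \<rho>" and one: "(\<integral>x. \<rho> x \<partial>lborel) = 1"
    and inv: "\<And>\<xi>. ennreal (\<rho> \<xi>) = (\<integral>\<^sup>+ x. ennreal (trans_density \<sigma> dt \<xi> x * \<rho> x) \<partial>lborel)"
    using eq unfolding em_equilibrium_def prob_density_def by auto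
  have rm[measurable]: "\<rho> \<in> borel_measurable lborel" using int1 by auto
  define c where "c = 15 * \<sigma>^6 * dt"
  have cp: "c > 0" unfolding c_def using sp assms(2) by simp
  define m where "m = (\<integral>x. x\<^sup>2 * \<rho> x \<partial>lborel)"
  have M: "(\<integral>\<^sup>+x. ennreal (x\<^sup>2 * \<rho> x) \<partial>lborel) = ennreal m"
    unfolding m_def using int2 nn by (intro nn_integral_eq_integral) auto
  have P1: "(\<integral>\<^sup>+x. ennreal (\<rho> x) \<partial>lborel) = 1"
    using nn_integral_eq_integral[OF int1] nn one by simp
  have tdm: "(\<lambda>(x, \<xi>). ennreal (\<xi>\<^sup>2 * trans_density \<sigma> dt \<xi> x * \<rho> x)) \<in> borel_measurable (lborel \<Otimes>\<^sub>M lborel)"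
    unfolding trans_density_def drift_def diffusion_def by measurable
  have "ennreal m = (\<integral>\<^sup>+\<xi>. ennreal (\<xi>\<^sup>2) * ennreal (\<rho> \<xi>) \<partial>lborel)"
    using M by (simp add: ennreal_mult')
  also have "\<dots> = (\<integral>\<^sup>+\<xi>. ennreal (\<xi>\<^sup>2) * (\<integral>\<^sup>+ x. ennreal (trans_density \<sigma> dt \<xi> x * \<rho> x) \<partial>lborel) \<partial>lborel)"
    by (simp add: inv[symmetric])
  also have "\<dots> = (\<integral>\<^sup>+\<xi>. (\<integral>\<^sup>+ x. ennreal (\<xi>\<^sup>2 * trans_density \<sigma> dt \<xi> x * \<rho> x) \<partial>lborel) \<partial>lborel)"
  proof (intro nn_integral_cong)
    fix \<xi> :: real
    have "ennreal (\<xi>\<^sup>2) * (\<integral>\<^sup>+ x. ennreal (trans_density \<sigma> dt \<xi> x * \<rho> x) \<partial>lborel)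
       = (\<integral>\<^sup>+ x. ennreal (\<xi>\<^sup>2) * ennreal (trans_density \<sigma> dt \<xi> x * \<rho> x) \<partial>lborel)"
      by (rule nn_integral_cmult[symmetric]) (unfold trans_density_def drift_def diffusion_def, measurable)
    also have "\<dots> = (\<integral>\<^sup>+ x. ennreal (\<xi>\<^sup>2 * trans_density \<sigma> dt \<xi> x * \<rho> x) \<partial>lborel)"
      by (simp add: ennreal_mult' mult.assoc)
    finally show "ennreal (\<xi>\<^sup>2) * (\<integral>\<^sup>+ x. ennreal (trans_density \<sigma> dt \<xi> x * \<rho> x) \<partial>lborel)
       = (\<integral>\<^sup>+ x. ennreal (\<xi>\<^sup>2 * trans_density \<sigma> dt \<xi> x * \<rho> x) \<partial>lborel)" .
  qed
  also have "\<dots> = (\<integral>\<^sup>+x. (\<integral>\<^sup>+ \<xi>. ennreal (\<xi>\<^sup>2 * trans_density \<sigma> dt \<xi> x * \<rho> x) \<partial>lborel) \<partial>lborel)"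
    using lborel_pair.Fubini'[OF tdm] by simp
  also have "\<dots> \<ge> (\<integral>\<^sup>+x. ennreal (x\<^sup>2 * \<rho> x) + ennreal c * ennreal (\<rho> x) \<partial>lborel)"
  proof (intro nn_integral_mono)
    fix x :: real
    have "(\<integral>\<^sup>+ \<xi>. ennreal (\<xi>\<^sup>2 * trans_density \<sigma> dt \<xi> x * \<rho> x) \<partial>lborel)
       = (\<integral>\<^sup>+ \<xi>. ennreal (\<xi>\<^sup>2 * trans_density \<sigma> dt \<xi> x) * ennreal (\<rho> x) \<partial>lborel)"
      using nn by (intro nn_integral_cong) (simp add: ennreal_mult'' )
    also have "\<dots> = (\<integral>\<^sup>+ \<xi>. ennreal (\<xi>\<^sup>2 * trans_density \<sigma> dt \<xi> x) \<partial>lborel) * ennreal (\<rho> x)"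
      by (rule nn_integral_multc) (unfold trans_density_def drift_def diffusion_def, measurable)
    also have "\<dots> = ennreal ((diffusion \<sigma> x * sqrt dt)\<^sup>2 + (x + drift \<sigma> x * dt)\<^sup>2) * ennreal (\<rho> x)"
      using second_moment_td[OF assms(2) sp] by simp
    also have "\<dots> \<ge> ennreal (x\<^sup>2 + c) * ennreal (\<rho> x)"
      using poly_bound[OF assms(2,1), of x] unfolding c_def by (intro mult_right_mono ennreal_leI) auto
    finally have "ennreal (x\<^sup>2 + c) * ennreal (\<rho> x) \<le> (\<integral>\<^sup>+ \<xi>. ennreal (\<xi>\<^sup>2 * trans_density \<sigma> dt \<xi> x * \<rho> x) \<partial>lborel)" .
    moreover have "ennreal (x\<^sup>2 + c) * ennreal (\<rho> x) = ennreal (x\<^sup>2 * \<rho> x) + ennreal c * ennreal (\<rho> x)"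
      using nn[of x] cp by (simp add: ennreal_mult'[symmetric] ennreal_plus[symmetric] distrib_right del: ennreal_plus)
    ultimately show "ennreal (x\<^sup>2 * \<rho> x) + ennreal c * ennreal (\<rho> x) \<le> (\<integral>\<^sup>+ \<xi>. ennreal (\<xi>\<^sup>2 * trans_density \<sigma> dt \<xi> x * \<rho> x) \<partial>lborel)" by simp
  qed
  also have "(\<integral>\<^sup>+x. ennreal (x\<^sup>2 * \<rho> x) + ennreal c * ennreal (\<rho> x) \<partial>lborel) = ennreal m + ennreal c"
    by (subst nn_integral_add) (auto simp: M nn_integral_cmult P1)
  finally have "ennreal m + ennreal c \<le> ennreal m" .
  moreover have "m \<ge> 0" unfolding m_def using nn by (intro integral_nonneg_AE) auto
  ultimately have "ennreal (m + c) \<le> ennreal m" using cp by (simp add: ennreal_plus)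
  hence "m + c \<le> m" using \<open>m \<ge> 0\<close> cp by (simp add: ennreal_le_iff)
  thus False using cp by simp
qed

end
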